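(* Let $S$ and $T$ be sets with $|T|\leq|S|$, let $\Phi_S$ be the full set of transition functions on $S$, and let $\Phi'_T$ be any set of transition functions on $T$. Then the machine $S\times\Phi_S$ is $T\times\Phi'_T$-complete.
   Context: For a set $S$, a transition function on $S$ is a function $S\to S$; the full set $\Phi_S$ is the set of all such functions. A machine $S\times\Phi'_S$ is a pair of a set $S$ and a subset $\Phi'_S\subseteq\Phi_S$. Isomorphism: $S\times\Phi'_S$ and $T\times\Phi'_T$ are isomorphic iff $|S|=|T|$, $|\Phi'_S|=|\Phi'_T|$, and there exist bijections $g:S\to T$, $h:\Phi'_S\to\Phi'_T$ with $g(\varphi(s))=h(\varphi)(g(s))$ for all $s\in S$, $\varphi\in\Phi'_S$. Functional reduction: $S\times\Phi'_2$ is a functional reduction of $S\times\Phi'_1$ iff $\Phi'_2\subseteq\Phi'_1$. State reduction: $S'\times\Phi'_{S'}$ is a state reduction of $S\times\Phi'_S$ iff (1) $S'\subseteq S$; (2) every $\varphi'\in\Phi'_{S'}$ agrees on $S'$ with some $\varphi\in\Phi'_S$; (3) for every $\varphi\in\Phi'_S$ with $\varphi(S')\subseteq S'$ there is $\varphi'\in\Phi'_{S'}$ agreeing with $\varphi$ on $S'$. A machine $B$ is a sub-machine of $A$ iff $B$ is obtained from $A$ by a functional reduction followed by a state reduction. A machine $S\times\Phi'_S$ is $T\times\Phi'_T$-complete if some sub-machine of $S\times\Phi'_S$ is isomorphic to $T\times\Phi'_T$. *)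

theory Defs
  imports "HOL-Library.FuncSet"
begin

(* A transition function on S is a map S -> S, represented extensionally
   (value undefined outside S), so Phi_S = S \<rightarrow>\<^sub>E S. *)
definition full_transitions :: "'a set \<Rightarrow> ('a \<Rightarrow> 'a) set" where
  "full_transitions S = S \<rightarrow>\<^sub>E S"

definition is_machine :: "'a set \<Rightarrow> ('a \<Rightarrow> 'a) set \<Rightarrow> bool" where
  "is_machine S \<Phi> \<longleftrightarrow> \<Phi> \<subseteq> full_transitions S"

definition machine_iso ::
  "'a set \<Rightarrow> ('a \<Rightarrow> 'a) set \<Rightarrow> 'b set \<Rightarrow> ('b \<Rightarrow> 'b) set \<Rightarrow> bool" where
  "machine_iso S \<Phi>S T \<Phi>T \<longleftrightarrow>
     (\<exists>g h. bij_betw g S T \<and> bij_betw h \<Phi>S \<Phi>T \<and>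
            (\<forall>s\<in>S. \<forall>\<phi>\<in>\<Phi>S. g (\<phi> s) = h \<phi> (g s)))"

definition functional_reduction :: "('a \<Rightarrow> 'a) set \<Rightarrow> ('a \<Rightarrow> 'a) set \<Rightarrow> bool" where
  "functional_reduction \<Phi>1 \<Phi>2 \<longleftrightarrow> \<Phi>2 \<subseteq> \<Phi>1"

definition state_reduction ::
  "'a set \<Rightarrow> ('a \<Rightarrow> 'a) set \<Rightarrow> 'a set \<Rightarrow> ('a \<Rightarrow> 'a) set \<Rightarrow> bool" where
  "state_reduction S \<Phi> S' \<Phi>' \<longleftrightarrow>
     is_machine S' \<Phi>' \<and> S' \<subseteq> S \<and>
     (\<forall>\<phi>'\<in>\<Phi>'. \<exists>\<phi>\<in>\<Phi>. \<forall>s\<in>S'. \<phi>' s = \<phi> s) \<and>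
     (\<forall>\<phi>\<in>\<Phi>. \<phi> ` S' \<subseteq> S' \<longrightarrow> (\<exists>\<phi>'\<in>\<Phi>'. \<forall>s\<in>S'. \<phi>' s = \<phi> s))"

definition sub_machine ::
  "'a set \<Rightarrow> ('a \<Rightarrow> 'a) set \<Rightarrow> 'a set \<Rightarrow> ('a \<Rightarrow> 'a) set \<Rightarrow> bool" where
  "sub_machine S \<Phi> S' \<Phi>' \<longleftrightarrow>
     (\<exists>\<Phi>2. functional_reduction \<Phi> \<Phi>2 \<and> state_reduction S \<Phi>2 S' \<Phi>')"

definition machine_complete ::
  "'a set \<Rightarrow> ('a \<Rightarrow> 'a) set \<Rightarrow> 'b set \<Rightarrow> ('b \<Rightarrow> 'b) set \<Rightarrow> bool" where
  "machine_complete S \<Phi> T \<Phi>T \<longleftrightarrow>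
     (\<exists>S' \<Phi>'. sub_machine S \<Phi> S' \<Phi>' \<and> machine_iso S' \<Phi>' T \<Phi>T)"

end

theory Submission
  imports Defs
begin

theorem theorem9:
  fixes S :: "'a set" and T :: "'b set" and \<Phi>T :: "('b \<Rightarrow> 'b) set"
  assumes card_le: "\<exists>f. inj_on f T \<and> f ` T \<subseteq> S"
    and machT: "is_machine T \<Phi>T"
  shows "machine_complete S (full_transitions S) T \<Phi>T"
proof -
  obtain f where inj: "inj_on f T" and fS: "f ` T \<subseteq> S" using card_le by blast
  define S' where "S' = f ` T"
  define fi where "fi = the_inv_into T f"
  have fi1: "\<And>t. t \<in> T \<Longrightarrow> fi (f t) = t" unfolding fi_def using inj the_inv_into_f_f by fast
  have fi2: "\<And>s. s \<in> S' \<Longrightarrow> fi s \<in> T \<and> f (fi s) = s" unfolding fi_def S'_def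
    using inj f_the_inv_into_f the_inv_into_into by (metis image_iff order_refl)
  have psiT: "\<And>\<psi> t. \<psi> \<in> \<Phi>T \<Longrightarrow> t \<in> T \<Longrightarrow> \<psi> t \<in> T"
    using machT unfolding is_machine_def full_transitions_def by blast
  have psiE: "\<And>\<psi>. \<psi> \<in> \<Phi>T \<Longrightarrow> \<psi> \<in> T \<rightarrow>\<^sub>E T"
    using machT unfolding is_machine_def full_transitions_def by blast
  define conj where "conj \<psi> = restrict (\<lambda>s. f (\<psi> (fi s))) S'" for \<psi>
  define ext where "ext \<psi> = restrict (\<lambda>s. if s \<in> S' then f (\<psi> (fi s)) else s) S" for \<psi>
  define h where "h \<phi> = restrict (\<lambda>t. fi (\<phi> (f t))) T" for \<phi> :: "'a \<Rightarrow> 'a"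
  define \<Phi>2 where "\<Phi>2 = ext ` \<Phi>T"
  define \<Phi>' where "\<Phi>' = conj ` \<Phi>T"
  have hc: "\<And>\<psi>. \<psi> \<in> \<Phi>T \<Longrightarrow> h (conj \<psi>) = \<psi>"
  proof -
    fix \<psi> assume p: "\<psi> \<in> \<Phi>T"
    show "h (conj \<psi>) = \<psi>"
    proof
      fix t show "h (conj \<psi>) t = \<psi> t"
        using psiE[OF p] fi1 psiT[OF p] by (cases "t \<in> T") (auto simp: h_def conj_def S'_def PiE_def extensional_def)
    qed
  qed
  have red: "functional_reduction (full_transitions S) \<Phi>2"
    unfolding functional_reduction_def full_transitions_def \<Phi>2_def ext_def
    using fi1 fi2 psiT fS by (auto simp: S'_def image_subset_iff)
  have mach': "is_machine S' \<Phi>'"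
    unfolding is_machine_def full_transitions_def \<Phi>'_def conj_def
    using fi2 psiT by (auto simp: S'_def)
  have sr: "state_reduction S \<Phi>2 S' \<Phi>'"
    unfolding state_reduction_def
  proof (intro conjI ballI impI)
    show "S' \<subseteq> S" using fS S'_def by simp
  next
    fix \<phi>' assume "\<phi>' \<in> \<Phi>'"
    then obtain \<psi> where "\<psi> \<in> \<Phi>T" "\<phi>' = conj \<psi>" unfolding \<Phi>'_def by blast
    then show "\<exists>\<phi>\<in>\<Phi>2. \<forall>s\<in>S'. \<phi>' s = \<phi> s"
      using fS by (intro bexI[of _ "ext \<psi>"]) (auto simp: \<Phi>2_def conj_def ext_def S'_def)
  next
    fix \<phi> assume "\<phi> \<in> \<Phi>2"
    then obtain \<psi> where "\<psi> \<in> \<Phi>T" "\<phi> = ext \<psi>" unfolding \<Phi>2_def by blast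
    then show "\<exists>\<phi>'\<in>\<Phi>'. \<forall>s\<in>S'. \<phi>' s = \<phi> s"
      using fS by (intro bexI[of _ "conj \<psi>"]) (auto simp: \<Phi>'_def conj_def ext_def S'_def)
  qed (fact mach')
  have iso: "machine_iso S' \<Phi>' T \<Phi>T"
    unfolding machine_iso_def
  proof (intro exI conjI)
    show "bij_betw fi S' T"
      by (rule bij_betw_byWitness[where f'=f]) (use fi1 fi2 in \<open>auto simp: S'_def\<close>)
    show "bij_betw h \<Phi>' \<Phi>T"
      by (rule bij_betw_byWitness[where f'=conj]) (use hc in \<open>auto simp: \<Phi>'_def\<close>)
    show "\<forall>s\<in>S'. \<forall>\<phi>\<in>\<Phi>'. fi (\<phi> s) = h \<phi> (fi s)"
    proof (intro ballI)
      fix s \<phi> assume s: "s \<in> S'" and "\<phi> \<in> \<Phi>'"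
      then obtain \<psi> where p: "\<psi> \<in> \<Phi>T" "\<phi> = conj \<psi>" unfolding \<Phi>'_def by blast
      have "fi (\<phi> s) = \<psi> (fi s)" using p s fi2[OF s] fi1 psiT by (simp add: conj_def)
      moreover have "h \<phi> = \<psi>" using p hc by simp
      ultimately show "fi (\<phi> s) = h \<phi> (fi s)" by simp
    qed
  qed
  show ?thesis unfolding machine_complete_def sub_machine_def using red sr iso by blast
qed

end
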